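(* Let $\varphi:L\to L'$ be a morphism of co-Heyting algebras and $d$ a positive integer. (1) $\varphi(dL)\subseteq dL'$. (2) If $\varphi$ is surjective then: (a) $\varphi(dL)=dL'$; (b) $\dim L'<d$ if and only if $dL\subseteq\operatorname{Ker}\varphi$; (c) $\operatorname{Ker}\varphi\subseteq dL$ if and only if $\varphi^{-1}(dL')=dL$. (3) If $\varphi$ is surjective and the ideal $dL$ is principal, then $dL'$ is principal and $\varphi(\varepsilon_d(L))=\varepsilon_d(L')$.
   Context: A co-Heyting algebra is a bounded distributive lattice $(L,0,1,\vee,\wedge)$ such that $a-b=\min\{c\in L: a\le b\vee c\}$ exists for all $a,b$; morphisms preserve $0,1,\vee,\wedge,-$, and $\operatorname{Ker}\varphi=\varphi^{-1}(\{0\})$. $\operatorname{Spec}L$ is the set of prime filters ordered by inclusion; the height (resp. coheight) of a prime filter is its foundation rank (resp. foundation rank for the reverse order) in $\operatorname{Spec}L$, where foundation rank is defined by: $\operatorname{rk}x\ge\beta+1$ iff some $y<x$ has $\operatorname{rk}y\ge\beta$, and at limit ordinals by intersection. $\operatorname{codim}_L a=\min\{\operatorname{height}\mathfrak p: a\in\mathfrak p\in\operatorname{Spec}L\}$ ($\min\emptyset=+\infty$), $\dim_L a=\sup\{\operatorname{coheight}\mathfrak p: a\in\mathfrak p\in\operatorname{Spec}L\}$ ($\sup\emptyset=-\infty$), and $\dim L=\dim_L 1$. $dL=\{a\in L:\operatorname{codim}_La\ge d\}$, an ideal of $L$; when it is principal, $\varepsilon_d(L)$ denotes its generator. *)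

theory Defs
  imports Main "HOL-Library.Extended_Real"
begin

definition coheyting :: "'a::{bounded_lattice,distrib_lattice} itself \<Rightarrow> bool" where
  "coheyting _ \<longleftrightarrow> (\<forall>a b::'a. \<exists>c. a \<le> sup b c \<and> (\<forall>c'. a \<le> sup b c' \<longrightarrow> c \<le> c'))"

definition cminus :: "'a::{bounded_lattice,distrib_lattice} \<Rightarrow> 'a \<Rightarrow> 'a" where
  "cminus a b = (LEAST c. a \<le> sup b c)"

definition coheyting_hom ::
  "('a::{bounded_lattice,distrib_lattice} \<Rightarrow> 'b::{bounded_lattice,distrib_lattice}) \<Rightarrow> bool" where
  "coheyting_hom f \<longleftrightarrow> f bot = bot \<and> f top = top \<and>
     (\<forall>a b. f (sup a b) = sup (f a) (f b)) \<and>
     (\<forall>a b. f (inf a b) = inf (f a) (f b)) \<and>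
     (\<forall>a b. f (cminus a b) = cminus (f a) (f b))"

definition Ker :: "('a \<Rightarrow> 'b::bounded_lattice) \<Rightarrow> 'a set" where
  "Ker f = f -` {bot}"

definition prime_filter :: "'a::{bounded_lattice,distrib_lattice} set \<Rightarrow> bool" where
  "prime_filter F \<longleftrightarrow> top \<in> F \<and> bot \<notin> F \<and>
     (\<forall>a b. a \<in> F \<longrightarrow> a \<le> b \<longrightarrow> b \<in> F) \<and>
     (\<forall>a b. a \<in> F \<longrightarrow> b \<in> F \<longrightarrow> inf a b \<in> F) \<and>
     (\<forall>a b. sup a b \<in> F \<longrightarrow> a \<in> F \<or> b \<in> F)"

definition Spec :: "'a::{bounded_lattice,distrib_lattice} set set" where
  "Spec = {F. prime_filter F}"

text \<open>rank_ge R x n: the foundation rank of x w.r.t. the strict order R is \<ge> n,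
  following "rk x \<ge> \<beta>+1 iff some y < x has rk y \<ge> \<beta>" (every x has rk \<ge> 0).\<close>

primrec rank_ge :: "('a \<Rightarrow> 'a \<Rightarrow> bool) \<Rightarrow> 'a \<Rightarrow> nat \<Rightarrow> bool" where
  "rank_ge R x 0 = True"
| "rank_ge R x (Suc n) = (\<exists>y. R y x \<and> rank_ge R y n)"

text \<open>Rank as an extended real; a rank \<ge> \<omega> is recorded as \<infinity>.\<close>

definition rank :: "('a \<Rightarrow> 'a \<Rightarrow> bool) \<Rightarrow> 'a \<Rightarrow> ereal" where
  "rank R x = (SUP n\<in>{n. rank_ge R x n}. ereal (real n))"

definition height :: "'a::{bounded_lattice,distrib_lattice} set \<Rightarrow> ereal" where
  "height p = rank (\<lambda>q q'. q \<in> Spec \<and> q' \<in> Spec \<and> q \<subset> q') p"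

definition coheight :: "'a::{bounded_lattice,distrib_lattice} set \<Rightarrow> ereal" where
  "coheight p = rank (\<lambda>q q'. q \<in> Spec \<and> q' \<in> Spec \<and> q' \<subset> q) p"

definition codim :: "'a::{bounded_lattice,distrib_lattice} \<Rightarrow> ereal" where
  "codim a = (INF p\<in>{p\<in>Spec. a \<in> p}. height p)"

definition dim :: "'a::{bounded_lattice,distrib_lattice} \<Rightarrow> ereal" where
  "dim a = (SUP p\<in>{p\<in>Spec. a \<in> p}. coheight p)"

definition dimL :: "'a::{bounded_lattice,distrib_lattice} itself \<Rightarrow> ereal" where
  "dimL _ = dim (top::'a)"

definition dpart :: "nat \<Rightarrow> 'a::{bounded_lattice,distrib_lattice} set" where
  "dpart d = {a. codim a \<ge> ereal (real d)}"

definition principal_ideal :: "'a::order set \<Rightarrow> bool" where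
  "principal_ideal I \<longleftrightarrow> (\<exists>e. I = {a. a \<le> e})"

definition eps :: "nat \<Rightarrow> 'a::{bounded_lattice,distrib_lattice}" where
  "eps d = (THE e. dpart d = {a. a \<le> e})"

end

theory Submission
  imports Defs
begin


abbreviation HR :: "'a::{bounded_lattice,distrib_lattice} set \<Rightarrow> 'a set \<Rightarrow> bool" where
  "HR \<equiv> (\<lambda>q q'. q \<in> Spec \<and> q' \<in> Spec \<and> q \<subset> q')"
abbreviation CR :: "'a::{bounded_lattice,distrib_lattice} set \<Rightarrow> 'a set \<Rightarrow> bool" where
  "CR \<equiv> (\<lambda>q q'. q \<in> Spec \<and> q' \<in> Spec \<and> q' \<subset> q)"

lemma rank_ge_Suc_mono: "rank_ge R x (Suc n) \<Longrightarrow> rank_ge R x n"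
  by (induction n arbitrary: x) auto

lemma rank_ge_mono: "rank_ge R x n \<Longrightarrow> m \<le> n \<Longrightarrow> rank_ge R x m"
proof (induction n)
  case 0 then show ?case by simp
next
  case (Suc n) then show ?case by (metis le_Suc_eq rank_ge_Suc_mono)
qed

lemma rank_le_pred: assumes "\<not> rank_ge R x d" shows "rank R x \<le> ereal (real d - 1)"
proof -
  have "\<forall>n\<in>{n. rank_ge R x n}. n < d" using assms rank_ge_mono
    by (metis mem_Collect_eq not_less)
  then show ?thesis unfolding rank_def
    by (intro SUP_least) (auto simp: of_nat_less_iff[symmetric] simp del: of_nat_less_iff)
qed

lemma rank_ge_iff: "ereal (real d) \<le> rank R x \<longleftrightarrow> rank_ge R x d"
proof
  assume "rank_ge R x d" then show "ereal d \<le> rank R x" unfolding rank_def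
    by (auto intro: SUP_upper)
next
  assume le: "ereal d \<le> rank R x"
  show "rank_ge R x d"
  proof (rule ccontr)
    assume n: "\<not> rank_ge R x d"
    have "ereal (real d) \<le> ereal (real d - 1)" using rank_le_pred[OF n] le by (rule order_trans[rotated])
    then show False by simp
  qed
qed

lemma prime_Spec:
  assumes "p \<in> Spec"
  shows "top \<in> p" "bot \<notin> p" "a \<in> p \<Longrightarrow> a \<le> b \<Longrightarrow> b \<in> p"
    "a \<in> p \<Longrightarrow> b \<in> p \<Longrightarrow> inf a b \<in> p" "sup a b \<in> p \<Longrightarrow> a \<in> p \<or> b \<in> p"
  using assms unfolding Spec_def prime_filter_def by blast+

lemma cm_props:
  assumes "coheyting TYPE('a::{bounded_lattice,distrib_lattice})"
  shows cm1: "(a::'a) \<le> sup b (cminus a b)" and cm2: "a \<le> sup b c \<Longrightarrow> cminus a b \<le> c"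
proof -
  obtain c0 where c0: "a \<le> sup b c0" "\<forall>c'. a \<le> sup b c' \<longrightarrow> c0 \<le> c'"
    using assms unfolding coheyting_def by blast
  have e: "cminus a b = c0" unfolding cminus_def by (rule Least_equality) (use c0 in auto)
  show "(a::'a) \<le> sup b (cminus a b)" using e c0 by simp
  show "a \<le> sup b c \<Longrightarrow> cminus a b \<le> c" using e c0 by simp
qed

lemma cm_le: assumes "coheyting TYPE('a::{bounded_lattice,distrib_lattice})"
  shows "cminus (a::'a) x \<le> a"
  by (rule cm2[OF assms]) simp

lemma cm_self: assumes "coheyting TYPE('a::{bounded_lattice,distrib_lattice})"
  shows "cminus (a::'a) a = bot"
  using cm2[OF assms, of a a bot] by (simp add: bot_unique)

lemma cm_idem: assumes "coheyting TYPE('a::{bounded_lattice,distrib_lattice})"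
  shows "cminus (a::'a) x \<le> cminus (cminus a x) x"
proof (rule cm2[OF assms])
  have "a \<le> sup x (cminus a x)" by (rule cm1[OF assms])
  also have "\<dots> \<le> sup x (sup x (cminus (cminus a x) x))"
    using cm1[OF assms, of "cminus a x" x] by (simp add: sup.coboundedI2)
  finally show "a \<le> sup x (cminus (cminus a x) x)" by (simp add: sup_assoc[symmetric])
qed

lemma hom_props:
  assumes "coheyting_hom \<phi>"
  shows "\<phi> bot = bot" "\<phi> top = top" "\<phi> (sup a b) = sup (\<phi> a) (\<phi> b)"
    "\<phi> (inf a b) = inf (\<phi> a) (\<phi> b)" "\<phi> (cminus a b) = cminus (\<phi> a) (\<phi> b)"
  using assms unfolding coheyting_hom_def by auto

lemma hom_mono: assumes "coheyting_hom \<phi>" "a \<le> b" shows "\<phi> a \<le> \<phi> b"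
proof -
  have "a = inf a b" using assms(2) by (simp add: inf.absorb1)
  then have "\<phi> a = inf (\<phi> a) (\<phi> b)" using hom_props(4)[OF assms(1)] by metis
  then show ?thesis by (metis inf.orderI)
qed

fun spec :: "'a::{bounded_lattice,distrib_lattice} list \<Rightarrow> 'a" where
  "spec [] = top"
| "spec (x # xs) = inf x (cminus (spec xs) x)"

lemma spec_hom: "coheyting_hom \<phi> \<Longrightarrow> \<phi> (spec xs) = spec (map \<phi> xs)"
  by (induction xs) (auto simp: hom_props)

definition filt :: "'a::bounded_lattice set \<Rightarrow> bool" where
  "filt G \<longleftrightarrow> top \<in> G \<and> (\<forall>a b. a \<in> G \<longrightarrow> a \<le> b \<longrightarrow> b \<in> G) \<and> (\<forall>a b. a \<in> G \<longrightarrow> b \<in> G \<longrightarrow> inf a b \<in> G)"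
definition idl :: "'a::bounded_lattice set \<Rightarrow> bool" where
  "idl I \<longleftrightarrow> bot \<in> I \<and> (\<forall>a b. b \<in> I \<longrightarrow> a \<le> b \<longrightarrow> a \<in> I) \<and> (\<forall>a b. a \<in> I \<longrightarrow> b \<in> I \<longrightarrow> sup a b \<in> I)"

lemma PFT:
  fixes F I :: "'a::{bounded_lattice,distrib_lattice} set"
  assumes "filt F" "idl I" "F \<inter> I = {}"
  shows "\<exists>P. P \<in> Spec \<and> F \<subseteq> P \<and> P \<inter> I = {}"
proof -
  let ?A = "{G. filt G \<and> F \<subseteq> G \<and> G \<inter> I = {}}"
  have "\<exists>M\<in>?A. \<forall>X\<in>?A. M \<subseteq> X \<longrightarrow> X = M"
  proof (rule Zorn_Lemma2, intro ballI)
    fix C assume C: "C \<in> chains ?A"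
    show "\<exists>U\<in>?A. \<forall>X\<in>C. X \<subseteq> U"
    proof (cases "C = {}")
      case True then show ?thesis using assms by auto
    next
      case False
      have sub: "C \<subseteq> ?A" and ch: "\<forall>X\<in>C. \<forall>Y\<in>C. X \<subseteq> Y \<or> Y \<subseteq> X"
        using C unfolding chains_def chain_subset_def by auto
      have "filt (\<Union>C)" unfolding filt_def
      proof (intro conjI allI impI)
        show "top \<in> \<Union>C" using False sub unfolding filt_def by blast
      next
        fix a b assume "a \<in> \<Union>C" "a \<le> b" then show "b \<in> \<Union>C" using sub unfolding filt_def by blast
      next
        fix a b assume "a \<in> \<Union>C" "b \<in> \<Union>C"
        then obtain X Y where X: "X\<in>C" "a\<in>X" and Y: "Y\<in>C" "b\<in>Y" by blast
        show "inf a b \<in> \<Union>C"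
        proof (cases "X \<subseteq> Y")
          case True then have "inf a b \<in> Y" using sub X Y unfolding filt_def by blast
          then show ?thesis using Y by blast
        next
          case False then have "Y \<subseteq> X" using ch X Y by blast
          then have "inf a b \<in> X" using sub X Y unfolding filt_def by blast
          then show ?thesis using X by blast
        qed
      qed
      moreover have "F \<subseteq> \<Union>C" using False sub by blast
      moreover have "\<Union>C \<inter> I = {}" using sub by blast
      ultimately show ?thesis by blast
    qed
  qed
  then obtain M where M: "M \<in> ?A" and max: "\<forall>X\<in>?A. M \<subseteq> X \<longrightarrow> X = M" by blast
  have fM: "filt M" and FM: "F \<subseteq> M" and MI: "M \<inter> I = {}" using M by auto
  have iI: "idl I" by (rule assms(2))
  have key: "\<exists>m\<in>M. inf m c \<in> I" if c: "c \<notin> M" for c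
  proof -
    let ?G = "{y. \<exists>m\<in>M. inf m c \<le> y}"
    have "filt ?G" unfolding filt_def
    proof (intro conjI allI impI)
      have tM: "top \<in> M" using fM unfolding filt_def by blast
      have "inf top c \<le> top" by simp
      then show "top \<in> ?G" using tM by blast
    next
      fix a b assume "a \<in> ?G" "a \<le> b"
      then obtain m where "m \<in> M" "inf m c \<le> a" by blast
      moreover from this(2) \<open>a \<le> b\<close> have "inf m c \<le> b" by (rule order_trans)
      ultimately show "b \<in> ?G" by blast
    next
      fix a b assume "a \<in> ?G" "b \<in> ?G"
      then obtain m1 m2 where h: "m1 \<in> M" "inf m1 c \<le> a" "m2 \<in> M" "inf m2 c \<le> b" by blast
      have mM: "inf m1 m2 \<in> M" using fM h(1,3) unfolding filt_def by blast
      have "inf (inf m1 m2) c \<le> inf m1 c" by (rule inf_mono) simp_all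
      then have 1: "inf (inf m1 m2) c \<le> a" using h(2) by (rule order_trans)
      have "inf (inf m1 m2) c \<le> inf m2 c" by (rule inf_mono) simp_all
      then have 2: "inf (inf m1 m2) c \<le> b" using h(4) by (rule order_trans)
      have "inf (inf m1 m2) c \<le> inf a b" using 1 2 by (rule le_infI)
      then show "inf a b \<in> ?G" using mM by blast
    qed
    moreover have "M \<subseteq> ?G"
    proof
      fix m assume "m \<in> M"
      moreover have "inf m c \<le> m" by simp
      ultimately show "m \<in> ?G" by blast
    qed
    moreover have "c \<in> ?G"
    proof -
      have tM: "top \<in> M" using fM unfolding filt_def by blast
      have "inf top c \<le> c" by simp
      then show ?thesis using tM by blast
    qed
    ultimately have GA: "?G \<notin> ?A"
    proof -
      assume a1: "filt ?G" "M \<subseteq> ?G" "c \<in> ?G"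
      show "?G \<notin> ?A"
      proof
        assume "?G \<in> ?A"
        then have "?G = M" using max a1(2) by blast
        then show False using a1(3) c by simp
      qed
    qed
    have "F \<subseteq> ?G" using FM \<open>M \<subseteq> ?G\<close> by (rule subset_trans)
    then have "\<not> (?G \<inter> I = {})" using GA \<open>filt ?G\<close> by simp
    then obtain y m where "m \<in> M" "inf m c \<le> y" "y \<in> I" by blast
    moreover have "\<forall>a b. b \<in> I \<longrightarrow> a \<le> b \<longrightarrow> a \<in> I" using iI unfolding idl_def by blast
    ultimately show ?thesis by blast
  qed
  have "prime_filter M" unfolding prime_filter_def
  proof (intro conjI allI impI)
    show "top \<in> M" using fM unfolding filt_def by blast
    show "bot \<notin> M" using MI iI unfolding idl_def by blast
  next
    fix a b assume "a \<in> M" "a \<le> b" then show "b \<in> M" using fM unfolding filt_def by blast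
  next
    fix a b assume "a \<in> M" "b \<in> M" then show "inf a b \<in> M" using fM unfolding filt_def by blast
  next
    fix a b assume ab: "sup a b \<in> M"
    show "a \<in> M \<or> b \<in> M"
    proof (rule ccontr)
      assume "\<not> (a \<in> M \<or> b \<in> M)"
      then obtain m1 m2 where m1: "m1 \<in> M" "inf m1 a \<in> I" and m2: "m2 \<in> M" "inf m2 b \<in> I"
        using key by blast
      define m where "m = inf (inf m1 m2) (sup a b)"
      have mM: "m \<in> M" unfolding m_def using fM m1 m2 ab unfolding filt_def by blast
      have "inf m a \<le> inf m1 a" unfolding m_def by (meson inf.cobounded1 inf_mono order_refl order_trans)
      then have i1: "inf m a \<in> I" using m1 iI unfolding idl_def by blast
      have "inf m b \<le> inf m2 b" unfolding m_def by (meson inf.cobounded1 inf.cobounded2 inf_mono order_refl order_trans)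
      then have i2: "inf m b \<in> I" using m2 iI unfolding idl_def by blast
      have "m = sup (inf m a) (inf m b)" unfolding m_def
        by (simp add: inf_sup_distrib1[symmetric] inf.absorb1)
      then have "m \<in> I" using i1 i2 iI unfolding idl_def by metis
      then show False using mM MI by blast
    qed
  qed
  then show ?thesis using FM MI unfolding Spec_def by blast
qed



lemma filt_up: "filt {y. (c::'a::bounded_lattice) \<le> y}"
  unfolding filt_def
proof (intro conjI allI impI)
  show "top \<in> {y. c \<le> y}" by simp
next
  fix a b assume "a \<in> {y. c \<le> y}" "a \<le> b" then show "b \<in> {y. c \<le> y}" by (simp add: order_trans)
next
  fix a b assume "a \<in> {y. c \<le> y}" "b \<in> {y. c \<le> y}" then show "inf a b \<in> {y. c \<le> y}" by simp
qed

lemma dpart_iff: "a \<in> dpart d \<longleftrightarrow> (\<forall>p\<in>Spec. a \<in> p \<longrightarrow> rank_ge HR p d)"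
  unfolding dpart_def codim_def height_def by (auto simp: le_INF_iff rank_ge_iff)

lemma SP:
  assumes ch: "coheyting TYPE('a::{bounded_lattice,distrib_lattice})"
  shows "p \<in> Spec \<Longrightarrow> rank_ge HR p k \<Longrightarrow> \<exists>xs. length xs = k \<and> spec xs \<in> (p::'a set)"
proof (induction k arbitrary: p)
  case 0 then show ?case using prime_Spec(1) by (metis list.size(3) spec.simps(1))
next
  case (Suc k)
  obtain q where q: "q \<in> Spec" "q \<subset> p" "rank_ge HR q k" using Suc.prems by auto
  obtain xs where xs: "length xs = k" "spec xs \<in> q" using Suc.IH q by blast
  obtain x where x: "x \<in> p" "x \<notin> q" using q by blast
  have "sup x (cminus (spec xs) x) \<in> q" using cm1[OF ch] xs(2) prime_Spec(3)[OF q(1)] by blast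
  then have "cminus (spec xs) x \<in> q" using prime_Spec(5)[OF q(1)] x(2) by blast
  then have "cminus (spec xs) x \<in> p" using q(2) by blast
  then have "spec (x#xs) \<in> p" using prime_Spec(4)[OF Suc.prems(1)] x(1) by simp
  then show ?case using xs(1) by (metis length_Cons)
qed

lemma SPcod:
  assumes ch: "coheyting TYPE('a::{bounded_lattice,distrib_lattice})"
  shows "r \<in> Spec \<Longrightarrow> spec xs \<in> (r::'a set) \<Longrightarrow> rank_ge HR r (length xs)"
proof (induction xs arbitrary: r)
  case Nil then show ?case by simp
next
  case (Cons x xs)
  define u where "u = spec xs"
  have r: "r \<in> Spec" by (rule Cons.prems(1))
  have sr: "inf x (cminus u x) \<in> r" using Cons.prems(2) unfolding u_def by simp
  have xr: "x \<in> r" by (rule prime_Spec(3)[OF r sr]) simp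
  have ur: "cminus u x \<in> r" by (rule prime_Spec(3)[OF r sr]) simp
  let ?F = "{y. cminus u x \<le> y}"
  let ?I = "{y. \<exists>c. c \<notin> r \<and> y \<le> sup c x}"
  have fF: "filt ?F" by (rule filt_up)
  have iI: "idl ?I" unfolding idl_def
  proof (intro conjI allI impI)
    have "bot \<notin> r" using prime_Spec(2)[OF r] .
    then show "bot \<in> ?I" by auto
  next
    fix a b assume "b \<in> ?I" "a \<le> b"
    then obtain c where "c \<notin> r" "b \<le> sup c x" by blast
    moreover from this(2) \<open>a \<le> b\<close> have "a \<le> sup c x" by (metis order_trans)
    ultimately show "a \<in> ?I" by blast
  next
    fix a b assume "a \<in> ?I" "b \<in> ?I"
    then obtain c1 c2 where h: "c1 \<notin> r" "a \<le> sup c1 x" "c2 \<notin> r" "b \<le> sup c2 x" by blast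
    have "sup c1 c2 \<notin> r" using h(1,3) prime_Spec(5)[OF r] by metis
    have "sup c1 x \<le> sup (sup c1 c2) x" by (rule sup_mono) simp_all
    then have 1: "a \<le> sup (sup c1 c2) x" using h(2) by (metis order_trans)
    have "sup c2 x \<le> sup (sup c1 c2) x" by (rule sup_mono) simp_all
    then have 2: "b \<le> sup (sup c1 c2) x" using h(4) by (metis order_trans)
    note \<open>sup c1 c2 \<notin> r\<close>
    moreover have "sup a b \<le> sup (sup c1 c2) x" using 1 2 by (rule le_supI)
    ultimately show "sup a b \<in> ?I" by blast
  qed
  have disj: "?F \<inter> ?I = {}"
  proof (rule ccontr)
    assume "?F \<inter> ?I \<noteq> {}"
    then obtain y c where h: "cminus u x \<le> y" "c \<notin> r" "y \<le> sup c x" by blast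
    have "cminus u x \<le> sup x c" using h(1,3) by (metis order_trans sup_commute)
    then have "cminus (cminus u x) x \<le> c" by (rule cm2[OF ch])
    then have "cminus u x \<le> c" using cm_idem[OF ch, of u x] by (metis order_trans)
    then have "c \<in> r" by (rule prime_Spec(3)[OF r ur])
    then show False using h(2) by blast
  qed
  obtain r' where r': "r' \<in> Spec" "?F \<subseteq> r'" "r' \<inter> ?I = {}" using PFT[OF fF iI disj] by blast
  have u'r: "cminus u x \<in> r'" using r'(2) by blast
  have "u \<in> r'" by (rule prime_Spec(3)[OF r'(1) u'r cm_le[OF ch]])
  then have IH: "rank_ge HR r' (length xs)" using Cons.IH r'(1) unfolding u_def by blast
  have sub: "r' \<subseteq> r"
  proof
    fix y assume "y \<in> r'"
    show "y \<in> r"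
    proof (rule ccontr)
      assume "y \<notin> r"
      moreover have "y \<le> sup y x" by simp
      ultimately have "y \<in> ?I" by blast
      then show False using \<open>y \<in> r'\<close> r'(3) by blast
    qed
  qed
  have "x \<in> ?I" using prime_Spec(2)[OF r] by (metis (mono_tags, lifting) mem_Collect_eq order_refl sup_bot_left)
  then have "x \<notin> r'" using r'(3) by blast
  then have "r' \<subset> r" using sub xr by blast
  then show ?case using IH r r'(1) by auto
qed

inductive_set Jset :: "nat \<Rightarrow> 'a::{bounded_lattice,distrib_lattice} set" for d where
  Jbot: "bot \<in> Jset d"
| Jspec: "length xs = d \<Longrightarrow> spec xs \<in> Jset d"
| Jsup: "a \<in> Jset d \<Longrightarrow> b \<in> Jset d \<Longrightarrow> sup a b \<in> Jset d"

lemma Jset_dpart: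
  assumes ch: "coheyting TYPE('a::{bounded_lattice,distrib_lattice})"
  shows "j \<in> Jset d \<Longrightarrow> (j::'a) \<in> dpart d"
proof (induction rule: Jset.induct)
  case Jbot then show ?case unfolding dpart_iff using prime_Spec(2) by blast
next
  case (Jspec xs) then show ?case unfolding dpart_iff using SPcod[OF ch] by blast
next
  case (Jsup a b) then show ?case unfolding dpart_iff using prime_Spec(5) by blast
qed

lemma dpart_down: "a \<le> b \<Longrightarrow> b \<in> dpart d \<Longrightarrow> a \<in> dpart d"
  unfolding dpart_iff using prime_Spec(3) by blast

lemma dpart_sup: "a \<in> dpart d \<Longrightarrow> b \<in> dpart d \<Longrightarrow> sup a b \<in> dpart d"
  unfolding dpart_iff using prime_Spec(5) by blast

lemma dpart_Jset:
  assumes ch: "coheyting TYPE('a::{bounded_lattice,distrib_lattice})"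
  shows "(a::'a) \<in> dpart d \<longleftrightarrow> (\<exists>j\<in>Jset d. a \<le> j)"
proof
  assume "\<exists>j\<in>Jset d. a \<le> j"
  then show "a \<in> dpart d" using Jset_dpart[OF ch] dpart_down by blast
next
  assume a: "a \<in> dpart d"
  show "\<exists>j\<in>Jset d. a \<le> j"
  proof (rule ccontr)
    assume na: "\<not> (\<exists>j\<in>Jset d. a \<le> j)"
    let ?F = "{y. a \<le> y}"
    let ?I = "{y::'a. \<exists>j\<in>Jset d. y \<le> j}"
    have fF: "filt ?F" by (rule filt_up)
    have iI: "idl ?I" unfolding idl_def
    proof (intro conjI allI impI)
      show "bot \<in> ?I" using Jbot by blast
    next
      fix x y assume "y \<in> ?I" "x \<le> y"
      then obtain j where "j \<in> Jset d" "y \<le> j" by blast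
      moreover from this(2) \<open>x \<le> y\<close> have "x \<le> j" by (metis order_trans)
      ultimately show "x \<in> ?I" by blast
    next
      fix x y assume "x \<in> ?I" "y \<in> ?I"
      then obtain j1 j2 where "j1 \<in> Jset d" "x \<le> j1" "j2 \<in> Jset d" "y \<le> j2" by blast
      moreover have "sup x y \<le> sup j1 j2" using calculation by (metis sup_mono)
      ultimately show "sup x y \<in> ?I" using Jsup by blast
    qed
    have disj: "?F \<inter> ?I = {}"
    proof (rule ccontr)
      assume "?F \<inter> ?I \<noteq> {}"
      then obtain y j where "a \<le> y" "j \<in> Jset d" "y \<le> j" by blast
      then show False using na by (metis order_trans)
    qed
    obtain P where P: "P \<in> Spec" "?F \<subseteq> P" "P \<inter> ?I = {}" using PFT[OF fF iI disj] by blast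
    have "a \<in> P" using P(2) by blast
    then have "rank_ge HR P d" using a P(1) unfolding dpart_iff by blast
    then obtain xs where "length xs = d" "spec xs \<in> P" using SP[OF ch P(1)] by blast
    then have "spec xs \<in> ?I" using Jspec by blast
    then show False using P(3) \<open>spec xs \<in> P\<close> by blast
  qed
qed



lemma pre_Spec:
  assumes h: "coheyting_hom \<phi>" and P: "P \<in> Spec"
  shows "\<phi> -` P \<in> Spec"
  unfolding Spec_def mem_Collect_eq prime_filter_def
proof (intro conjI allI impI)
  show "top \<in> \<phi> -` P" using prime_Spec(1)[OF P] hom_props(2)[OF h] by simp
  show "bot \<notin> \<phi> -` P" using prime_Spec(2)[OF P] hom_props(1)[OF h] by simp
next
  fix a b assume "a \<in> \<phi> -` P" "a \<le> b"
  then show "b \<in> \<phi> -` P" using prime_Spec(3)[OF P] hom_mono[OF h] by blast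
next
  fix a b assume "a \<in> \<phi> -` P" "b \<in> \<phi> -` P"
  then show "inf a b \<in> \<phi> -` P" using prime_Spec(4)[OF P] hom_props(4)[OF h] by simp
next
  fix a b assume "sup a b \<in> \<phi> -` P"
  then show "a \<in> \<phi> -` P \<or> b \<in> \<phi> -` P" using prime_Spec(5)[OF P] hom_props(3)[OF h] by simp
qed

lemma img_pre:
  assumes cha: "coheyting TYPE('a::{bounded_lattice,distrib_lattice})"
    and chb: "coheyting TYPE('b::{bounded_lattice,distrib_lattice})"
    and h: "coheyting_hom (\<phi>::'a \<Rightarrow> 'b)"
    and p: "p \<in> Spec" and K: "\<forall>x\<in>p. \<phi> x \<noteq> bot"
  shows "\<phi> -` (\<phi> ` p) = p"
proof
  show "p \<subseteq> \<phi> -` (\<phi> ` p)" by blast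
  show "\<phi> -` (\<phi> ` p) \<subseteq> p"
  proof
    fix w assume "w \<in> \<phi> -` (\<phi> ` p)"
    then obtain z where z: "z \<in> p" "\<phi> w = \<phi> z" by auto
    have "\<phi> (cminus z w) = cminus (\<phi> z) (\<phi> z)" using hom_props(5)[OF h] z(2) by simp
    also have "\<dots> = bot" by (rule cm_self[OF chb])
    finally have "cminus z w \<notin> p" using K by blast
    moreover have "sup w (cminus z w) \<in> p" by (rule prime_Spec(3)[OF p z(1)]) (rule cm1[OF cha])
    ultimately show "w \<in> p" using prime_Spec(5)[OF p] by blast
  qed
qed

lemma img_Spec:
  assumes cha: "coheyting TYPE('a::{bounded_lattice,distrib_lattice})"
    and chb: "coheyting TYPE('b::{bounded_lattice,distrib_lattice})"
    and h: "coheyting_hom (\<phi>::'a \<Rightarrow> 'b)" and s: "surj \<phi>"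
    and p: "p \<in> Spec" and K: "\<forall>x\<in>p. \<phi> x \<noteq> bot"
  shows "\<phi> ` p \<in> Spec"
  unfolding Spec_def mem_Collect_eq prime_filter_def
proof (intro conjI allI impI)
  show "top \<in> \<phi> ` p" using prime_Spec(1)[OF p] hom_props(2)[OF h] by (metis image_eqI)
  show "bot \<notin> \<phi> ` p" using K by auto
next
  fix a b assume a: "a \<in> \<phi> ` p" and ab: "a \<le> b"
  obtain x where x: "x \<in> p" "a = \<phi> x" using a by blast
  obtain z where z: "b = \<phi> z" using s by (metis surjD)
  have "\<phi> (sup x z) = sup a b" using hom_props(3)[OF h] x z by simp
  also have "\<dots> = b" using ab by (simp add: sup.absorb2)
  finally have e: "\<phi> (sup x z) = b" .
  have "sup x z \<in> p" by (rule prime_Spec(3)[OF p x(1)]) simp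
  then show "b \<in> \<phi> ` p" using e by (metis image_eqI)
next
  fix a b assume "a \<in> \<phi> ` p" "b \<in> \<phi> ` p"
  then obtain x y where "x \<in> p" "a = \<phi> x" "y \<in> p" "b = \<phi> y" by blast
  moreover then have "inf x y \<in> p" using prime_Spec(4)[OF p] by blast
  ultimately show "inf a b \<in> \<phi> ` p" using hom_props(4)[OF h] by (metis image_eqI)
next
  fix a b assume ab: "sup a b \<in> \<phi> ` p"
  obtain x where x: "a = \<phi> x" using s by (metis surjD)
  obtain y where y: "b = \<phi> y" using s by (metis surjD)
  have "\<phi> (sup x y) \<in> \<phi> ` p" using ab x y hom_props(3)[OF h] by simp
  then have "sup x y \<in> p" using img_pre[OF cha chb h p K] by blast
  then have "x \<in> p \<or> y \<in> p" using prime_Spec(5)[OF p] by blast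
  then show "a \<in> \<phi> ` p \<or> b \<in> \<phi> ` p" using x y by blast
qed

lemma Jset_hom:
  assumes h: "coheyting_hom \<phi>"
  shows "j \<in> Jset d \<Longrightarrow> \<phi> j \<in> Jset d"
proof (induction rule: Jset.induct)
  case Jbot
  have "\<phi> bot = bot" by (rule hom_props(1)[OF h])
  then show ?case using Jset.Jbot by simp
next
  case (Jspec xs)
  have "\<phi> (spec xs) = spec (map \<phi> xs)" by (rule spec_hom[OF h])
  moreover have "spec (map \<phi> xs) \<in> Jset d" using Jspec by (intro Jset.Jspec) simp
  ultimately show ?case by simp
next
  case (Jsup a b)
  have "\<phi> (sup a b) = sup (\<phi> a) (\<phi> b)" by (rule hom_props(3)[OF h])
  then show ?case using Jset.Jsup[OF Jsup.IH] by simp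
qed

lemma Jset_lift:
  assumes h: "coheyting_hom \<phi>" and s: "surj \<phi>"
  shows "j \<in> Jset d \<Longrightarrow> \<exists>i\<in>Jset d. \<phi> i = j"
proof (induction rule: Jset.induct)
  case Jbot
  have "\<phi> bot = bot" by (rule hom_props(1)[OF h])
  then show ?case using Jset.Jbot by blast
next
  case (Jspec xs)
  define ys where "ys = map (inv \<phi>) xs"
  have "map \<phi> ys = xs" unfolding ys_def using s by (simp add: comp_def surj_f_inv_f)
  moreover have "\<phi> (spec ys) = spec (map \<phi> ys)" by (rule spec_hom[OF h])
  ultimately have e: "\<phi> (spec ys) = spec xs" by simp
  have "spec ys \<in> Jset d" using Jspec unfolding ys_def by (intro Jset.Jspec) simp
  then show ?case using e by blast
next
  case (Jsup a b)
  then obtain i1 i2 where i: "i1 \<in> Jset d" "\<phi> i1 = a" "i2 \<in> Jset d" "\<phi> i2 = b" by blast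
  have "\<phi> (sup i1 i2) = sup a b" using hom_props(3)[OF h] i(2,4) by simp
  moreover have "sup i1 i2 \<in> Jset d" using Jset.Jsup[OF i(1,3)] .
  ultimately show ?case by blast
qed

lemma CH:
  assumes cha: "coheyting TYPE('a::{bounded_lattice,distrib_lattice})"
    and chb: "coheyting TYPE('b::{bounded_lattice,distrib_lattice})"
    and h: "coheyting_hom (\<phi>::'a \<Rightarrow> 'b)" and s: "surj \<phi>"
  shows "p \<in> Spec \<Longrightarrow> (\<forall>x\<in>p. \<phi> x \<noteq> bot) \<Longrightarrow> rank_ge HR p k \<Longrightarrow> rank_ge CR (\<phi> ` p) m
    \<Longrightarrow> \<exists>q\<in>Spec. (\<forall>x\<in>q. \<phi> x \<noteq> bot) \<and> rank_ge CR (\<phi> ` q) (m + k)"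
proof (induction k arbitrary: p m)
  case 0 then show ?case by auto
next
  case (Suc k)
  obtain r where r: "r \<in> Spec" "r \<subset> p" "rank_ge HR r k" using Suc.prems(3) by auto
  have Kr: "\<forall>x\<in>r. \<phi> x \<noteq> bot" using Suc.prems(2) r(2) by blast
  have ir: "\<phi> ` r \<in> Spec" by (rule img_Spec[OF cha chb h s r(1) Kr])
  have ip: "\<phi> ` p \<in> Spec" by (rule img_Spec[OF cha chb h s Suc.prems(1,2)])
  have "\<phi> ` r \<noteq> \<phi> ` p"
  proof
    assume "\<phi> ` r = \<phi> ` p"
    then have "\<phi> -` (\<phi> ` r) = \<phi> -` (\<phi> ` p)" by simp
    then have "r = p" using img_pre[OF cha chb h r(1) Kr] img_pre[OF cha chb h Suc.prems(1,2)] by simp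
    then show False using r(2) by simp
  qed
  then have "\<phi> ` r \<subset> \<phi> ` p" using r(2) by blast
  then have "rank_ge CR (\<phi> ` r) (Suc m)" using ir ip Suc.prems(4) by auto
  from Suc.IH[OF r(1) Kr r(3) this] show ?case by simp
qed

lemma CL:
  fixes p :: "'a::{bounded_lattice,distrib_lattice} set"
  shows "p \<in> Spec \<Longrightarrow> rank_ge CR p k \<Longrightarrow> rank_ge HR p m \<Longrightarrow> \<exists>t\<in>(Spec::'a set set). rank_ge HR t (m + k)"
proof (induction k arbitrary: p m)
  case 0 then have "rank_ge HR p (m+0)" by simp
  then show ?case using 0(1) by blast
next
  case (Suc k)
  obtain y where y: "y \<in> Spec" "p \<subset> y" "rank_ge CR y k" using Suc.prems(2) by auto
  have "rank_ge HR y (Suc m)" using y Suc.prems(1,3) by auto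
  from Suc.IH[OF y(1) y(3) this] show ?case by simp
qed

lemma dim_ge:
  fixes p :: "'b::{bounded_lattice,distrib_lattice} set"
  assumes "p \<in> Spec" "rank_ge CR p d"
  shows "ereal (real d) \<le> dimL TYPE('b)"
proof -
  have "ereal (real d) \<le> coheight p" unfolding coheight_def by (rule rank_ge_iff[THEN iffD2, OF assms(2)])
  also have "\<dots> \<le> dim (top::'b)" unfolding dim_def
    by (rule SUP_upper) (simp add: assms(1) prime_Spec(1)[OF assms(1)])
  finally show ?thesis unfolding dimL_def .
qed

lemma dim_lt:
  assumes "0 < d" and A: "\<forall>p\<in>(Spec::'b::{bounded_lattice,distrib_lattice} set set). \<not> rank_ge CR p d"
  shows "dimL TYPE('b) < ereal (real d)"
proof -
  have "dim (top::'b) \<le> ereal (real d - 1)" unfolding dim_def coheight_def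
  proof (rule SUP_least)
    fix p :: "'b set" assume "p \<in> {p \<in> Spec. top \<in> p}"
    then have "\<not> rank_ge CR p d" using A by blast
    then show "rank CR p \<le> ereal (real d - 1)" by (rule rank_le_pred)
  qed
  also have "\<dots> < ereal (real d)" by simp
  finally show ?thesis unfolding dimL_def .
qed



lemma eps_eq:
  fixes e :: "'a::{bounded_lattice,distrib_lattice}"
  assumes "dpart d = {a. a \<le> e}"
  shows "eps d = e"
  unfolding eps_def
proof (rule the_equality)
  show "dpart d = {a. a \<le> e}" by (rule assms)
next
  fix e' :: 'a assume "dpart d = {a. a \<le> e'}"
  then have "{a. a \<le> e'} = {a. a \<le> e}" using assms by simp
  then have "e' \<le> e" "e \<le> e'" by (metis mem_Collect_eq order_refl)+
  then show "e' = e" by (rule antisym)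
qed

lemma idl_bot: "idl {bot::'a::bounded_lattice}"
  unfolding idl_def by (auto simp: bot_unique)

lemma bot_dpart: "(bot::'a::{bounded_lattice,distrib_lattice}) \<in> dpart d"
  unfolding dpart_iff using prime_Spec(2) by blast

theorem corollary3p9:
  fixes \<phi> :: "'a::{bounded_lattice,distrib_lattice} \<Rightarrow> 'b::{bounded_lattice,distrib_lattice}"
    and d :: nat
  assumes "coheyting TYPE('a)" and "coheyting TYPE('b)"
    and "coheyting_hom \<phi>" and "0 < d"
  shows "(\<phi> ` dpart d \<subseteq> dpart d)
       \<and> (surj \<phi> \<longrightarrow>
            \<phi> ` dpart d = dpart d
          \<and> (dimL TYPE('b) < ereal (real d) \<longleftrightarrow> (dpart d :: 'a set) \<subseteq> Ker \<phi>)
          \<and> (Ker \<phi> \<subseteq> dpart d \<longleftrightarrow> \<phi> -` (dpart d :: 'b set) = dpart d))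
       \<and> (surj \<phi> \<and> principal_ideal (dpart d :: 'a set) \<longrightarrow>
            principal_ideal (dpart d :: 'b set) \<and> \<phi> (eps d) = eps d)"
proof -
  note cha = assms(1) and chb = assms(2) and h = assms(3) and d0 = assms(4)
  have P1: "\<phi> ` dpart d \<subseteq> dpart d"
  proof
    fix b assume "b \<in> \<phi> ` dpart d"
    then obtain a where a: "a \<in> dpart d" "b = \<phi> a" by blast
    then obtain j where j: "j \<in> Jset d" "a \<le> j" using dpart_Jset[OF cha] by blast
    have "\<phi> a \<le> \<phi> j" by (rule hom_mono[OF h j(2)])
    moreover have "\<phi> j \<in> Jset d" by (rule Jset_hom[OF h j(1)])
    ultimately have "\<phi> a \<in> dpart d" using dpart_Jset[OF chb] by blast
    then show "b \<in> dpart d" using a(2) by simp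
  qed
  have P2a: "\<phi> ` dpart d = dpart d" if s: "surj \<phi>"
  proof
    show "\<phi> ` dpart d \<subseteq> dpart d" by (rule P1)
    show "dpart d \<subseteq> \<phi> ` dpart d"
    proof
      fix b assume "b \<in> (dpart d :: 'b set)"
      then obtain j' where j': "j' \<in> Jset d" "b \<le> j'" using dpart_Jset[OF chb] by blast
      obtain i where i: "i \<in> Jset d" "\<phi> i = j'" using Jset_lift[OF h s j'(1)] by blast
      obtain a0 where a0: "b = \<phi> a0" using s by (metis surjD)
      have "\<phi> (inf a0 i) = inf b j'" using hom_props(4)[OF h] a0 i(2) by simp
      also have "\<dots> = b" using j'(2) by (simp add: inf.absorb1)
      finally have e: "\<phi> (inf a0 i) = b" .
      have "inf a0 i \<le> i" by simp
      then have "inf a0 i \<in> dpart d" using i(1) dpart_Jset[OF cha] by blast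
      then show "b \<in> \<phi> ` dpart d" using e by (metis image_eqI)
    qed
  qed
  have P2b: "dimL TYPE('b) < ereal (real d) \<longleftrightarrow> (dpart d :: 'a set) \<subseteq> Ker \<phi>" if s: "surj \<phi>"
  proof
    assume lt: "dimL TYPE('b) < ereal (real d)"
    show "(dpart d :: 'a set) \<subseteq> Ker \<phi>"
    proof
      fix a assume aD: "a \<in> (dpart d :: 'a set)"
      show "a \<in> Ker \<phi>"
      proof (rule ccontr)
        assume "a \<notin> Ker \<phi>"
        then have na: "\<phi> a \<noteq> bot" unfolding Ker_def by simp
        have disj: "{y. \<phi> a \<le> y} \<inter> {bot} = {}" using na bot_unique by blast
        obtain P where P: "P \<in> Spec" "{y. \<phi> a \<le> y} \<subseteq> P" "P \<inter> {bot} = {}"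
          using PFT[OF filt_up idl_bot disj] by blast
        have pS: "\<phi> -` P \<in> Spec" by (rule pre_Spec[OF h P(1)])
        have "a \<in> \<phi> -` P" using P(2) by auto
        then have rp: "rank_ge HR (\<phi> -` P) d" using aD pS unfolding dpart_iff by blast
        have K: "\<forall>x\<in>\<phi> -` P. \<phi> x \<noteq> bot" using P(3) by auto
        have "rank_ge CR (\<phi> ` (\<phi> -` P)) 0" by simp
        from CH[OF cha chb h s pS K rp this]
        obtain q where q: "q \<in> Spec" "\<forall>x\<in>q. \<phi> x \<noteq> bot" "rank_ge CR (\<phi> ` q) (0 + d)" by blast
        have "\<phi> ` q \<in> Spec" by (rule img_Spec[OF cha chb h s q(1,2)])
        from dim_ge[OF this] q(3) have "ereal (real d) \<le> dimL TYPE('b)" by simp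
        then show False using lt by simp
      qed
    qed
  next
    assume sub: "(dpart d :: 'a set) \<subseteq> Ker \<phi>"
    show "dimL TYPE('b) < ereal (real d)"
    proof (rule dim_lt[OF d0], intro ballI notI)
      fix p :: "'b set" assume pS: "p \<in> Spec" and rc: "rank_ge CR p d"
      have "rank_ge HR p 0" by simp
      from CL[OF pS rc this] obtain t :: "'b set" where t: "t \<in> Spec" "rank_ge HR t (0 + d)" by blast
      then obtain xs where xs: "length xs = d" "spec xs \<in> t" using SP[OF chb] by auto
      have "spec xs \<in> Jset d" using xs(1) by (rule Jset.Jspec)
      then obtain i where i: "i \<in> Jset d" "\<phi> i = spec xs" using Jset_lift[OF h s] by blast
      have "i \<in> dpart d" by (rule Jset_dpart[OF cha i(1)])
      then have "\<phi> i = bot" using sub unfolding Ker_def by blast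
      then have "bot \<in> t" using xs(2) i(2) by simp
      then show False using prime_Spec(2)[OF t(1)] by blast
    qed
  qed
  have P2c: "Ker \<phi> \<subseteq> dpart d \<longleftrightarrow> \<phi> -` (dpart d :: 'b set) = dpart d" if s: "surj \<phi>"
  proof
    assume KD: "Ker \<phi> \<subseteq> dpart d"
    show "\<phi> -` (dpart d :: 'b set) = dpart d"
    proof
      show "dpart d \<subseteq> \<phi> -` (dpart d :: 'b set)" using P1 by blast
      show "\<phi> -` (dpart d :: 'b set) \<subseteq> dpart d"
      proof
        fix a assume "a \<in> \<phi> -` (dpart d :: 'b set)"
        then have "\<phi> a \<in> \<phi> ` dpart d" using P2a[OF s] by simp
        then obtain t where t: "t \<in> dpart d" "\<phi> a = \<phi> t" by blast
        have "\<phi> (cminus a t) = cminus (\<phi> t) (\<phi> t)" using hom_props(5)[OF h] t(2) by simp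
        also have "\<dots> = bot" by (rule cm_self[OF chb])
        finally have "cminus a t \<in> Ker \<phi>" unfolding Ker_def by simp
        then have "cminus a t \<in> dpart d" using KD by blast
        then have "sup t (cminus a t) \<in> dpart d" using t(1) dpart_sup by blast
        moreover have "a \<le> sup t (cminus a t)" by (rule cm1[OF cha])
        ultimately show "a \<in> dpart d" using dpart_down by blast
      qed
    qed
  next
    assume e: "\<phi> -` (dpart d :: 'b set) = dpart d"
    show "Ker \<phi> \<subseteq> dpart d"
    proof
      fix x assume "x \<in> Ker \<phi>"
      then have "\<phi> x = bot" unfolding Ker_def by simp
      then have "x \<in> \<phi> -` (dpart d :: 'b set)" using bot_dpart by simp
      then show "x \<in> dpart d" using e by simp
    qed
  qed
  have P3: "principal_ideal (dpart d :: 'b set) \<and> \<phi> (eps d) = eps d"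
    if s: "surj \<phi>" and pr: "principal_ideal (dpart d :: 'a set)"
  proof -
    obtain e :: 'a where e: "dpart d = {a. a \<le> e}" using pr unfolding principal_ideal_def by blast
    have ee: "eps d = e" by (rule eps_eq[OF e])
    have D': "(dpart d :: 'b set) = {b. b \<le> \<phi> e}"
    proof
      show "(dpart d :: 'b set) \<subseteq> {b. b \<le> \<phi> e}"
      proof
        fix b assume "b \<in> (dpart d :: 'b set)"
        then obtain a where "a \<in> dpart d" "b = \<phi> a" using P2a[OF s] by blast
        then show "b \<in> {b. b \<le> \<phi> e}" using e hom_mono[OF h] by blast
      qed
      show "{b. b \<le> \<phi> e} \<subseteq> (dpart d :: 'b set)"
      proof
        fix b assume b: "b \<in> {b. b \<le> \<phi> e}"
        obtain a0 where a0: "b = \<phi> a0" using s by (metis surjD)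
        have "\<phi> (inf a0 e) = inf b (\<phi> e)" using hom_props(4)[OF h] a0 by simp
        also have "\<dots> = b" using b by (simp add: inf.absorb1)
        finally have fe: "\<phi> (inf a0 e) = b" .
        have "inf a0 e \<in> dpart d" using e by simp
        then have "b \<in> \<phi> ` dpart d" using fe by (metis image_eqI)
        then show "b \<in> dpart d" using P1 by blast
      qed
    qed
    have "principal_ideal (dpart d :: 'b set)" unfolding principal_ideal_def using D' by blast
    moreover have "(eps d :: 'b) = \<phi> e" by (rule eps_eq[OF D'])
    ultimately show ?thesis using ee by simp
  qed
  show ?thesis using P1 P2a P2b P2c P3 by blast
qed


end
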